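(* Let $\mathcal{K}$ be a Hilbert space, let $A$ be a closable, densely defined operator in $\mathcal{K}$, let $A_0$ be an operator with $A_0\subseteq A^*$, and let $(T_n)_{n=0}^\infty\subseteq\mathbf{B}(\mathcal{K})$ be a sequence converging to $I_\mathcal{K}$ in the weak operator topology such that for every $n$: (f1) the commutator $\mathrm{ad}(T_n,\bar A)=T_n\bar A-\bar AT_n$ is densely defined and bounded in $\mathcal{K}$; and (f2) $T_n^*\mathcal{D}(A^* )\subseteq\mathcal{D}(\bar A_0)$. Then the following conditions are equivalent: (1) $\sup_{n\in\mathbb{N}}\|\mathrm{ad}(T_n,\bar A)\|<+\infty$; (2) $\sup_{n\in\mathbb{N}}\|\overline{\mathrm{ad}(T_n^*,A^* )}\|<+\infty$; (3) $\overline{\mathrm{ad}(T_n,\bar A)}\to 0$ in the weak operator topology as $n\to\infty$; (4) $\overline{\mathrm{ad}(T_n^*,A^* )}\to 0$ in the weak operator topology as $n\to\infty$.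
   Context: $\mathbf{B}(\mathcal{K})$ denotes the space of all bounded linear operators defined on all of $\mathcal{K}$. For operators $S,T$, $\mathrm{ad}(S,T):=ST-TS$, with sums and products of unbounded operators taken on their natural domains. $\bar S$ denotes the closure of a closable operator $S$; $\mathcal{D}(S)$ its domain. An operator $S$ is called bounded if $\|Sf\|\le c\|f\|$ for all $f\in\mathcal{D}(S)$ and some $c\ge0$, and $\|S\|$ is the supremum of $\|Sf\|$ over $f\in\mathcal{D}(S)$, $\|f\|\le1$. *)

theory Defs
  imports "HOL-Analysis.Analysis"
begin

class complex_vector = real_vector +
  fixes scaleC :: "complex \<Rightarrow> 'a \<Rightarrow> 'a"
  assumes scaleC_add_right: "scaleC a (x + y) = scaleC a x + scaleC a y"
    and scaleC_add_left: "scaleC (a + b) x = scaleC a x + scaleC b x"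
    and scaleC_scaleC: "scaleC a (scaleC b x) = scaleC (a * b) x"
    and scaleC_one: "scaleC 1 x = x"
    and scaleR_scaleC: "scaleR r x = scaleC (complex_of_real r) x"

class complex_inner = complex_vector + real_normed_vector +
  fixes cinner :: "'a \<Rightarrow> 'a \<Rightarrow> complex"
  assumes cinner_commute: "cinner x y = cnj (cinner y x)"
    and cinner_add_left: "cinner (x + y) z = cinner x z + cinner y z"
    and cinner_scaleC_left: "cinner (scaleC r x) y = cnj r * cinner x y"
    and cinner_real: "Im (cinner x x) = 0"
    and cinner_ge_zero: "0 \<le> Re (cinner x x)"
    and cinner_eq_zero_iff: "cinner x x = 0 \<longleftrightarrow> x = 0"
    and norm_eq_sqrt_cinner: "norm x = sqrt (Re (cinner x x))"

class chilbert = complex_inner + complete_space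

text \<open>An operator is a pair (domain, action); only values on the domain matter.\<close>
type_synonym 'a op = "'a set \<times> ('a \<Rightarrow> 'a)"

definition op_dom :: "'a op \<Rightarrow> 'a set" where "op_dom S = fst S"
definition app :: "'a op \<Rightarrow> 'a \<Rightarrow> 'a" where "app S = snd S"

definition csubspace :: "'a::complex_vector set \<Rightarrow> bool" where
  "csubspace D \<longleftrightarrow> 0 \<in> D \<and> (\<forall>x\<in>D. \<forall>y\<in>D. x + y \<in> D) \<and> (\<forall>c. \<forall>x\<in>D. scaleC c x \<in> D)"

definition linear_op :: "'a::complex_vector op \<Rightarrow> bool" where
  "linear_op S \<longleftrightarrow> csubspace (op_dom S) \<and>
     (\<forall>x\<in>op_dom S. \<forall>y\<in>op_dom S. app S (x + y) = app S x + app S y) \<and>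
     (\<forall>c. \<forall>x\<in>op_dom S. app S (scaleC c x) = scaleC c (app S x))"

definition graph :: "'a op \<Rightarrow> ('a \<times> 'a) set" where
  "graph S = {(x, app S x) | x. x \<in> op_dom S}"

definition densely_defined :: "'a::topological_space op \<Rightarrow> bool" where
  "densely_defined S \<longleftrightarrow> closure (op_dom S) = UNIV"

definition closable :: "'a::real_normed_vector op \<Rightarrow> bool" where
  "closable S \<longleftrightarrow> (\<forall>y. (0, y) \<in> closure (graph S) \<longrightarrow> y = 0)"

definition op_closure :: "'a::real_normed_vector op \<Rightarrow> 'a op" where
  "op_closure S = ({x. \<exists>y. (x, y) \<in> closure (graph S)},
                   \<lambda>x. THE y. (x, y) \<in> closure (graph S))"

definition op_adjoint :: "'a::complex_inner op \<Rightarrow> 'a op" where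
  "op_adjoint S = ({y. \<exists>z. \<forall>x\<in>op_dom S. cinner (app S x) y = cinner x z},
                   \<lambda>y. THE z. \<forall>x\<in>op_dom S. cinner (app S x) y = cinner x z)"

definition op_subset :: "'a op \<Rightarrow> 'a op \<Rightarrow> bool" where
  "op_subset S T \<longleftrightarrow> op_dom S \<subseteq> op_dom T \<and> (\<forall>x\<in>op_dom S. app S x = app T x)"

definition op_mult :: "'a op \<Rightarrow> 'a op \<Rightarrow> 'a op" where
  "op_mult S T = ({x \<in> op_dom T. app T x \<in> op_dom S}, \<lambda>x. app S (app T x))"

definition op_minus :: "'a::minus op \<Rightarrow> 'a op \<Rightarrow> 'a op" where
  "op_minus S T = (op_dom S \<inter> op_dom T, \<lambda>x. app S x - app T x)"

definition ad :: "'a::minus op \<Rightarrow> 'a op \<Rightarrow> 'a op" where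
  "ad S T = op_minus (op_mult S T) (op_mult T S)"

definition bounded_op :: "'a::real_normed_vector op \<Rightarrow> bool" where
  "bounded_op S \<longleftrightarrow> (\<exists>c\<ge>0. \<forall>f\<in>op_dom S. norm (app S f) \<le> c * norm f)"

definition op_norm :: "'a::real_normed_vector op \<Rightarrow> ereal" where
  "op_norm S = (SUP f\<in>{f \<in> op_dom S. norm f \<le> 1}. ereal (norm (app S f)))"

definition bounded_clinear :: "('a::complex_inner \<Rightarrow> 'a) \<Rightarrow> bool" where
  "bounded_clinear T \<longleftrightarrow> (\<forall>x y. T (x + y) = T x + T y) \<and> (\<forall>c x. T (scaleC c x) = scaleC c (T x))
      \<and> (\<exists>K. \<forall>x. norm (T x) \<le> norm x * K)"

definition bop :: "('a \<Rightarrow> 'a) \<Rightarrow> 'a op" where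
  "bop T = (UNIV, T)"

definition wot_tendsto :: "(nat \<Rightarrow> 'a::complex_inner \<Rightarrow> 'a) \<Rightarrow> ('a \<Rightarrow> 'a) \<Rightarrow> bool" where
  "wot_tendsto T L \<longleftrightarrow> (\<forall>x y. (\<lambda>n. cinner x (T n y)) \<longlonglongrightarrow> cinner x (L y))"

definition op_wot_tendsto_zero :: "(nat \<Rightarrow> 'a::complex_inner op) \<Rightarrow> bool" where
  "op_wot_tendsto_zero S \<longleftrightarrow> (\<forall>n. op_dom (S n) = UNIV \<and> bounded_clinear (app (S n)))
      \<and> wot_tendsto (\<lambda>n. app (S n)) (\<lambda>_. 0)"

end

theory Submission
  imports Defs
begin


context complex_inner begin

lemma cinner_zero_left[simp]: "cinner 0 y = 0"
  using cinner_add_left[of 0 0 y] by simp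

lemma cinner_add_right: "cinner x (y + z) = cinner x y + cinner x z"
  by (metis cinner_commute cinner_add_left complex_cnj_add)

lemma cinner_zero_right[simp]: "cinner x 0 = 0"
  by (metis cinner_commute cinner_zero_left complex_cnj_zero)

lemma cinner_scaleC_right: "cinner x (scaleC r y) = r * cinner x y"
  by (metis cinner_commute cinner_scaleC_left complex_cnj_cnj complex_cnj_mult)

lemma cinner_minus_left: "cinner (- x) y = - cinner x y"
  using cinner_add_left[of x "-x" y] by simp algebra

lemma cinner_minus_right: "cinner x (- y) = - cinner x y"
  using cinner_add_right[of x y "-y"] by simp algebra

lemma cinner_diff_left: "cinner (x - y) z = cinner x z - cinner y z"
  using cinner_add_left[of x "-y" z] cinner_minus_left by simp

lemma cinner_diff_right: "cinner x (y - z) = cinner x y - cinner x z"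
  using cinner_add_right[of x y "-z"] cinner_minus_right by simp

lemma cinner_scaleR_left: "cinner (scaleR r x) y = of_real r * cinner x y"
  by (simp add: scaleR_scaleC cinner_scaleC_left)

lemma cinner_scaleR_right: "cinner x (scaleR r y) = of_real r * cinner x y"
  by (simp add: scaleR_scaleC cinner_scaleC_right)

lemma cinner_self: "cinner x x = of_real ((norm x)^2)"
  using cinner_real[of x] cinner_ge_zero[of x] norm_eq_sqrt_cinner[of x]
  by (simp add: complex_eq_iff)

lemma Re_cinner_self: "Re (cinner x x) = (norm x)^2"
  by (simp add: cinner_self)

lemma norm_scaleC: "norm (scaleC c x) = cmod c * norm x"
proof -
  have "(norm (scaleC c x))^2 = (cmod c * norm x)^2"
  proof -
    have "of_real ((norm (scaleC c x))^2) = cinner (scaleC c x) (scaleC c x)"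
      by (simp add: cinner_self)
    also have "\<dots> = cnj c * c * cinner x x"
      by (simp add: cinner_scaleC_left cinner_scaleC_right)
    also have "\<dots> = of_real ((cmod c * norm x)^2)"
      by (simp add: cinner_self power_mult_distrib mult.commute) (metis of_real_power complex_norm_square)
    finally show ?thesis using of_real_eq_iff by blast
  qed
  then show ?thesis by (simp add: power2_eq_iff_nonneg)
qed

lemma norm_add_sq: "(norm (x + y))^2 = (norm x)^2 + 2 * Re (cinner x y) + (norm y)^2"
proof -
  have "(norm (x + y))^2 = Re (cinner (x+y) (x+y))" by (simp add: Re_cinner_self)
  also have "\<dots> = Re (cinner x x) + Re (cinner x y) + Re (cinner y x) + Re (cinner y y)"
    by (simp add: cinner_add_left cinner_add_right)
  also have "Re (cinner y x) = Re (cinner x y)" by (subst cinner_commute) simp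
  finally show ?thesis by (simp add: Re_cinner_self)
qed

lemma Re_cinner_le: "Re (cinner x y) \<le> norm x * norm y"
proof (cases "x = 0 \<or> y = 0")
  case True then show ?thesis by auto
next
  case False
  then have nx: "norm x > 0" and ny: "norm y > 0" by auto
  define u where "u = scaleR (norm y) x - scaleR (norm x) y"
  have "0 \<le> (norm u)^2" by simp
  also have "(norm u)^2 = Re (cinner u u)" by (simp add: Re_cinner_self)
  also have "Re (cinner u u) = 2 * (norm x)^2 * (norm y)^2 - 2 * norm x * norm y * Re (cinner x y)"
  proof -
    have "Re (cinner u u) = (norm y)^2 * Re (cinner x x) - norm x * norm y * Re (cinner x y)
        - norm x * norm y * Re (cinner y x) + (norm x)^2 * Re (cinner y y)"
      unfolding u_def
      by (simp add: cinner_diff_left cinner_diff_right cinner_scaleR_left cinner_scaleR_right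
          power2_eq_square algebra_simps)
    moreover have "Re (cinner y x) = Re (cinner x y)" by (subst cinner_commute) simp
    ultimately show ?thesis by (simp add: Re_cinner_self power2_eq_square algebra_simps)
  qed
  finally have "norm x * norm y * Re (cinner x y) \<le> norm x * norm y * (norm x * norm y)"
    by (simp add: power2_eq_square algebra_simps)
  then show ?thesis using nx ny
    by (meson mult_le_cancel_left_pos mult_pos_pos)
qed

lemma cinner_Cauchy_Schwarz: "cmod (cinner x y) \<le> norm x * norm y"
proof (cases "cinner x y = 0")
  case True then show ?thesis by simp
next
  case False
  define c where "c = cinner x y / of_real (cmod (cinner x y))"
  have cc: "cmod c = 1" using False by (simp add: c_def norm_divide)
  have "cinner (scaleC c x) y = cnj c * cinner x y" by (simp add: cinner_scaleC_left)
  also have "\<dots> = of_real (cmod (cinner x y))"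
    using False unfolding c_def
    by (simp add: complex_mult_cnj divide_simps power2_eq_square)
      (metis complex_mult_cnj complex_norm_square mult.commute of_real_mult power2_eq_square)
  finally have "cmod (cinner x y) = Re (cinner (scaleC c x) y)" by simp
  also have "\<dots> \<le> norm (scaleC c x) * norm y" by (rule Re_cinner_le)
  finally show ?thesis by (simp add: norm_scaleC cc)
qed

end

lemma bounded_bilinear_cinner: "bounded_bilinear (cinner :: 'a::complex_inner \<Rightarrow> 'a \<Rightarrow> complex)"
proof (rule bounded_bilinear.intro)
  fix a a' b b' :: 'a and r :: real
  show "cinner (a + a') b = cinner a b + cinner a' b" by (rule cinner_add_left)
  show "cinner a (b + b') = cinner a b + cinner a b'" by (rule cinner_add_right)
  show "cinner (scaleR r a) b = scaleR r (cinner a b)" by (simp add: cinner_scaleR_left scaleR_conv_of_real)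
  show "cinner a (scaleR r b) = scaleR r (cinner a b)" by (simp add: cinner_scaleR_right scaleR_conv_of_real)
  show "\<exists>K. \<forall>(a::'a) (b::'a). norm (cinner a b) \<le> norm a * norm b * K"
    by (rule exI[of _ 1]) (simp add: cinner_Cauchy_Schwarz)
qed



lemma tendsto_cinner[tendsto_intros]:
  "(f \<longlongrightarrow> a) F \<Longrightarrow> (g \<longlongrightarrow> b) F \<Longrightarrow> ((\<lambda>x. cinner (f x) (g x)) \<longlongrightarrow> cinner a b) F"
  by (rule bounded_bilinear.tendsto[OF bounded_bilinear_cinner])

lemma continuous_on_cinner[continuous_intros]:
  fixes f g :: "'b::topological_space \<Rightarrow> 'a::complex_inner"
  shows "continuous_on S f \<Longrightarrow> continuous_on S g \<Longrightarrow> continuous_on S (\<lambda>x. cinner (f x) (g x))"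
  unfolding continuous_on_def by (auto intro!: tendsto_intros)

lemma dense_closed_all:
  fixes D :: "'a::topological_space set"
  assumes "closure D = UNIV" "closed P" "D \<subseteq> P" shows "x \<in> P"
  using closure_minimal[OF assms(3,2)] assms(1) by auto

lemma dense_ortho:
  fixes u :: "'a::complex_inner"
  assumes "closure D = UNIV" "\<And>d. d \<in> D \<Longrightarrow> cinner d u = 0" shows "u = 0"
proof -
  have "closed {d. cinner d u = 0}"
    by (intro closed_Collect_eq continuous_intros)
  then have "u \<in> {d. cinner d u = 0}" using dense_closed_all[OF assms(1)] assms(2) by blast
  then show ?thesis using cinner_eq_zero_iff by auto
qed

lemma dense_ortho_eq:
  fixes u v :: "'a::complex_inner"
  assumes "closure D = UNIV" "\<And>d. d \<in> D \<Longrightarrow> cinner d u = cinner d v" shows "u = v"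
  using dense_ortho[OF assms(1), of "u - v"] assms(2) by (simp add: cinner_diff_right)

lemma parallelogram:
  fixes a b :: "'a::complex_inner"
  shows "(norm (a + b))^2 + (norm (a - b))^2 = 2 * (norm a)^2 + 2 * (norm b)^2"
proof -
  have "(norm (a - b))^2 = (norm a)^2 + 2 * Re (cinner a (-b)) + (norm (-b))^2"
    using norm_add_sq[of a "-b"] by simp
  then show ?thesis using norm_add_sq[of a b] by (simp add: cinner_minus_right)
qed

lemma csubspace_diff: "csubspace M \<Longrightarrow> x \<in> M \<Longrightarrow> y \<in> M \<Longrightarrow> x - y \<in> M"
  unfolding csubspace_def
  by (metis diff_conv_add_uminus scaleC_one scaleR_minus1_left scaleR_scaleC of_real_1 of_real_minus)

lemma ortho_exists:
  fixes M :: "'a::chilbert set"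
  assumes M: "csubspace M" and u: "u \<notin> closure M"
  shows "\<exists>w. (\<forall>m\<in>M. cinner m w = 0) \<and> cinner w u \<noteq> 0"
proof -
  have M0: "0 \<in> M" and Madd: "\<And>x y. x \<in> M \<Longrightarrow> y \<in> M \<Longrightarrow> x + y \<in> M"
    and Msc: "\<And>c x. x \<in> M \<Longrightarrow> scaleC c x \<in> M"
    using M unfolding csubspace_def by auto
  have Mne: "M \<noteq> {}" using M0 by auto
  define d where "d = infdist u M"
  have dpos: "d > 0"
    using in_closure_iff_infdist_zero[OF Mne, of u] u infdist_nonneg[of u M] unfolding d_def by auto
  have dle: "d \<le> norm (u - m)" if "m \<in> M" for m
    using infdist_le[OF that, of u] by (simp add: d_def dist_norm)
  have near: "\<exists>m\<in>M. norm (u - m) < d + e" if "e > 0" for e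
  proof (rule ccontr)
    assume "\<not> ?thesis"
    then have "\<forall>m\<in>M. d + e \<le> dist u m" by (auto simp: dist_norm)
    then have "d + e \<le> infdist u M"
      unfolding infdist_notempty[OF Mne] by (intro cINF_greatest[OF Mne]) auto
    then show False using that d_def by simp
  qed
  have "\<forall>k. \<exists>x. x \<in> M \<and> norm (u - x) < d + 1 / (Suc k)"
  proof
    fix k :: nat
    have "(0::real) < 1 / Suc k" by simp
    from near[OF this] show "\<exists>x. x \<in> M \<and> norm (u - x) < d + 1 / (Suc k)" by blast
  qed
  then obtain m where "\<forall>k. m k \<in> M \<and> norm (u - m k) < d + 1 / (Suc k)"
    by (metis choice)
  then have mM: "\<And>k. m k \<in> M" and mnear: "\<And>k. norm (u - m k) < d + 1 / (Suc k)" by auto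
  have dk: "(\<lambda>k. norm (u - m k)) \<longlonglongrightarrow> d"
  proof (rule tendsto_sandwich[of "\<lambda>_. d" _ _ "\<lambda>k. d + 1 / Suc k"])
    show "\<forall>\<^sub>F k in sequentially. d \<le> norm (u - m k)" using dle mM by auto
    show "\<forall>\<^sub>F k in sequentially. norm (u - m k) \<le> d + 1 / real (Suc k)"
      using mnear by (intro always_eventually allI less_imp_le) simp
    show "(\<lambda>k. d) \<longlonglongrightarrow> d" by simp
    show "(\<lambda>k. d + 1 / real (Suc k)) \<longlonglongrightarrow> d"
      using tendsto_add[OF tendsto_const[of d] LIMSEQ_Suc[OF lim_inverse_n']] by simp
  qed
  have para: "(norm (m k - m j))^2 \<le> 2 * (norm (u - m k))^2 + 2 * (norm (u - m j))^2 - 4 * d^2" for k j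
  proof -
    have mid: "scaleC (1/2) (m k + m j) \<in> M" using mM Madd Msc by blast
    have "2 * d \<le> 2 * norm (u - scaleC (1/2) (m k + m j))" using dle[OF mid] by simp
    also have "2 * norm (u - scaleC (1/2) (m k + m j)) = norm ((u - m k) + (u - m j))"
    proof -
      have h: "scaleR 2 (scaleC (1/2) x) = x" for x :: 'a
        by (simp add: scaleR_scaleC scaleC_scaleC scaleC_one)
      have "scaleR 2 (u - scaleC (1/2) (m k + m j)) = scaleR 2 u - (m k + m j)"
        by (simp only: scaleR_diff_right h)
      then have "(u - m k) + (u - m j) = scaleR 2 (u - scaleC (1/2) (m k + m j))"
        by (simp add: scaleR_2 algebra_simps)
      then show ?thesis by simp
    qed
    finally have "(2*d)^2 \<le> (norm ((u - m k) + (u - m j)))^2"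
      using dpos by (intro power_mono) auto
    moreover have "(u - m k) - (u - m j) = m j - m k" by simp
    ultimately show ?thesis using parallelogram[of "u - m k" "u - m j"]
      by (simp add: norm_minus_commute power_mult_distrib)
  qed
  have sq: "(\<lambda>k. (norm (u - m k))^2) \<longlonglongrightarrow> d^2" by (intro tendsto_intros dk)
  have "Cauchy m"
  proof (rule CauchyI)
    fix e :: real assume e: "0 < e"
    have "eventually (\<lambda>k. (norm (u - m k))^2 < d^2 + e^2/4) sequentially"
      using order_tendstoD(2)[OF sq, of "d^2 + e^2/4"] e by simp
    then obtain N where N: "\<And>k. k \<ge> N \<Longrightarrow> (norm (u - m k))^2 < d^2 + e^2/4"
      by (auto simp: eventually_sequentially)
    show "\<exists>M. \<forall>k\<ge>M. \<forall>j\<ge>M. norm (m k - m j) < e"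
    proof (intro exI allI impI)
      fix k j assume kj: "N \<le> k" "N \<le> j"
      have "(norm (m k - m j))^2 < e^2" using para[of k j] N[OF kj(1)] N[OF kj(2)] by linarith
      then show "norm (m k - m j) < e" using e power_less_imp_less_base[of "norm (m k - m j)" 2 e] by simp
    qed
  qed
  then obtain p where mp: "m \<longlonglongrightarrow> p" using Cauchy_convergent_iff convergent_def by blast
  define w where "w = u - p"
  have "(\<lambda>k. norm (u - m k)) \<longlonglongrightarrow> norm (u - p)" by (intro tendsto_intros mp)
  then have nw: "norm w = d" using LIMSEQ_unique[OF _ dk] w_def by blast
  have orth: "cinner c w = 0" if c: "c \<in> M" for c
  proof -
    have ge: "d \<le> norm (w + scaleC t c)" for t
    proof -
      have "(\<lambda>k. norm (u - (m k - scaleC t c))) \<longlonglongrightarrow> norm (u - (p - scaleC t c))"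
        by (intro tendsto_intros mp)
      moreover have "\<forall>k. d \<le> norm (u - (m k - scaleC t c))"
        using dle csubspace_diff[OF M mM Msc[OF c]] by blast
      ultimately have "d \<le> norm (u - (p - scaleC t c))"
        using LIMSEQ_le_const by blast
      then show ?thesis by (simp add: w_def algebra_simps)
    qed
    define a where "a = cinner w c"
    define q where "q = (cmod a)^2"
    define n where "n = (norm c)^2"
    define s where "s = 1 / (n + 1)"
    have n0: "n \<ge> 0" and q0: "q \<ge> 0" by (auto simp: n_def q_def)
    have s0: "s > 0" using n0 by (simp add: s_def)
    have sn: "s * n < 1" using n0 by (simp add: s_def divide_simps)
    define t where "t = - (of_real s * cnj a)"
    have "d^2 \<le> (norm (w + scaleC t c))^2" using ge[of t] dpos by (intro power_mono) auto
    also have "\<dots> = d^2 + 2 * Re (cinner w (scaleC t c)) + (norm (scaleC t c))^2"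
      by (simp add: norm_add_sq nw)
    finally have fin: "0 \<le> 2 * Re (cinner w (scaleC t c)) + (norm (scaleC t c))^2" by simp
    have e1: "cinner w (scaleC t c) = t * a" by (simp add: cinner_scaleC_right a_def)
    have e2: "(norm (scaleC t c))^2 = (cmod t)^2 * n" by (simp add: norm_scaleC n_def power_mult_distrib)
    have "0 \<le> 2 * Re (t * a) + (cmod t)^2 * n" using fin unfolding e1 e2 .
    moreover have "t * a = - of_real (s * q)"
      unfolding t_def q_def by (simp add: algebra_simps) (metis of_real_power complex_norm_square)
    moreover have "(cmod t)^2 = s^2 * q"
      unfolding t_def q_def using s0 by (simp add: norm_mult power_mult_distrib)
    ultimately have "0 \<le> - 2 * (s * q) + s^2 * q * n" by simp
    moreover have "s^2 * q * n \<le> s * q"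
    proof -
      have "s * q * (s * n) \<le> s * q * 1" using sn s0 q0 by (intro mult_left_mono) auto
      then show ?thesis by (simp add: power2_eq_square algebra_simps)
    qed
    ultimately have "s * q \<le> 0" by linarith
    then have "q = 0" using s0 q0 by (simp add: mult_le_0_iff)
    then have "a = 0" by (simp add: q_def)
    then show ?thesis unfolding a_def by (subst cinner_commute) simp
  qed
  have "(\<lambda>k. cinner w (m k)) \<longlonglongrightarrow> cinner w p" by (intro tendsto_intros mp)
  moreover have "cinner w (m k) = 0" for k using orth[OF mM[of k]] by (subst cinner_commute) simp
  ultimately have "(\<lambda>k. 0) \<longlonglongrightarrow> cinner w p" by simp
  then have wp: "cinner w p = 0" using LIMSEQ_unique[OF _ tendsto_const] by metis
  have "cinner w u = cinner w w" using wp by (simp add: w_def cinner_diff_right)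
  also have "\<dots> = of_real (d^2)" by (simp add: cinner_self nw)
  finally have "cinner w u \<noteq> 0" using dpos by simp
  then show ?thesis using orth by blast
qed


instantiation prod :: (complex_vector, complex_vector) complex_vector
begin
definition scaleC_prod_def: "scaleC c x = (scaleC c (fst x), scaleC c (snd x))"
instance
proof
  fix a b :: complex and x y :: "'a \<times> 'b" and r :: real
  show "scaleC a (x + y) = scaleC a x + scaleC a y"
    by (simp add: scaleC_prod_def scaleC_add_right)
  show "scaleC (a + b) x = scaleC a x + scaleC b x"
    by (simp add: scaleC_prod_def scaleC_add_left)
  show "scaleC a (scaleC b x) = scaleC (a * b) x"
    by (simp add: scaleC_prod_def scaleC_scaleC)
  show "scaleC 1 x = x"
    by (simp add: scaleC_prod_def scaleC_one)
  show "scaleR r x = scaleC (complex_of_real r) x"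
    by (simp add: scaleC_prod_def scaleR_prod_def scaleR_scaleC)
qed
end

instantiation prod :: (complex_inner, complex_inner) complex_inner
begin
definition cinner_prod_def: "cinner x y = cinner (fst x) (fst y) + cinner (snd x) (snd y)"
instance
proof
  fix x y z :: "'a \<times> 'b" and r :: complex
  show "cinner x y = cnj (cinner y x)"
    by (simp add: cinner_prod_def) (metis cinner_commute)
  show "cinner (x + y) z = cinner x z + cinner y z"
    by (simp add: cinner_prod_def cinner_add_left)
  show "cinner (scaleC r x) y = cnj r * cinner x y"
    by (simp add: cinner_prod_def scaleC_prod_def cinner_scaleC_left algebra_simps)
  show "Im (cinner x x) = 0"
    by (simp add: cinner_prod_def cinner_self)
  show "0 \<le> Re (cinner x x)"
    by (simp add: cinner_prod_def cinner_self)
  show "(cinner x x = 0) = (x = 0)"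
  proof -
    have "cinner x x = of_real ((norm (fst x))^2 + (norm (snd x))^2)"
      by (simp add: cinner_prod_def cinner_self)
    then have "cinner x x = 0 \<longleftrightarrow> (norm (fst x))^2 + (norm (snd x))^2 = 0"
      by (simp only: of_real_eq_0_iff)
    also have "\<dots> \<longleftrightarrow> fst x = 0 \<and> snd x = 0"
      by (simp add: add_nonneg_eq_0_iff)
    finally show ?thesis by (simp add: prod_eq_iff)
  qed
  show "norm x = sqrt (Re (cinner x x))"
    by (simp add: cinner_prod_def cinner_self norm_prod_def)
qed
end

instance prod :: (chilbert, chilbert) chilbert ..

section \<open>Riesz representation and adjoints\<close>

lemma scaleC_zero_left[simp]: "scaleC 0 (x::'a::complex_vector) = 0"
  by (metis of_real_0 scaleR_scaleC scaleR_zero_left)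

lemma scaleC_minus: "scaleC (- c) (x::'a::complex_vector) = - scaleC c x"
proof -
  have "scaleC (- c) x + scaleC c x = 0" by (simp flip: scaleC_add_left)
  then show ?thesis by (simp add: eq_neg_iff_add_eq_0)
qed


lemma bcl_add: "bounded_clinear T \<Longrightarrow> T (x + y) = T x + T y"
  by (simp add: bounded_clinear_def)
lemma bcl_scaleC: "bounded_clinear T \<Longrightarrow> T (scaleC c x) = scaleC c (T x)"
  by (simp add: bounded_clinear_def)

lemma bcl_bounded_linear:
  assumes "bounded_clinear T" shows "bounded_linear T"
proof
  fix x y :: 'a and r :: real
  show "T (x + y) = T x + T y" using assms by (simp add: bounded_clinear_def)
  show "T (scaleR r x) = scaleR r (T x)" using assms by (simp add: bounded_clinear_def scaleR_scaleC)
  show "\<exists>K. \<forall>x. norm (T x) \<le> norm x * K" using assms by (simp add: bounded_clinear_def)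
qed

lemma riesz_adj:
  fixes T :: "'a::chilbert \<Rightarrow> 'a"
  assumes T: "bounded_clinear T"
  shows "\<exists>z. \<forall>x. cinner (T x) y = cinner x z"
proof -
  define psi where "psi x = cinner y (T x)" for x
  have psi_add: "psi (a + b) = psi a + psi b" for a b
    by (simp add: psi_def bcl_add[OF T] cinner_add_right)
  have psi_sc: "psi (scaleC c a) = c * psi a" for c a
    by (simp add: psi_def bcl_scaleC[OF T] cinner_scaleC_right)
  have psi_0: "psi 0 = 0" using psi_add[of 0 0] by simp
  define N where "N = {x. psi x = 0}"
  have NS: "csubspace N" unfolding csubspace_def N_def using psi_add psi_sc psi_0 by auto
  have contT: "continuous_on UNIV T" using bounded_linear.continuous_on[OF bcl_bounded_linear[OF T] continuous_on_id] by simp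
  have "closed N" unfolding N_def psi_def by (intro closed_Collect_eq continuous_intros contT)
  show ?thesis
  proof (cases "\<forall>x. psi x = 0")
    case True
    then show ?thesis
      by (intro exI[of _ 0]) (metis cinner_commute cinner_zero_right complex_cnj_zero psi_def)
  next
    case False
    then obtain u where "psi u \<noteq> 0" by blast
    then have "u \<notin> closure N" using \<open>closed N\<close> by (simp add: N_def)
    from ortho_exists[OF NS this] obtain w where
      orth: "\<And>m. m \<in> N \<Longrightarrow> cinner m w = 0" and wu: "cinner w u \<noteq> 0" by blast
    have pw: "psi w \<noteq> 0"
    proof
      assume "psi w = 0"
      then have "cinner w w = 0" using orth by (simp add: N_def)
      then have "w = 0" using cinner_eq_zero_iff by blast
      then show False using wu by simp
    qed
    have "w \<noteq> 0" using wu by auto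
    then have ww: "cinner w w \<noteq> 0" using cinner_eq_zero_iff by blast
    define z where "z = scaleC (cnj (psi w) / cinner w w) w"
    show ?thesis
    proof (intro exI allI)
      fix x
      define m where "m = x - scaleC (psi x / psi w) w"
      have "psi m = 0"
      proof -
        have "m = x + scaleC (- (psi x / psi w)) w"
          by (simp add: m_def scaleC_minus)
        then show ?thesis using pw by (simp add: psi_add psi_sc)
      qed
      then have "cinner m w = 0" using orth N_def by blast
      then have xw: "cinner x w = cnj (psi x / psi w) * cinner w w"
        by (simp add: m_def cinner_diff_left cinner_scaleC_left)
      have "cinner x z = cnj (psi w) / cinner w w * cinner x w"
        by (simp add: z_def cinner_scaleC_right)
      also have "\<dots> = cnj (psi x)" using xw pw ww by (simp add: field_simps)
      also have "\<dots> = cinner (T x) y" by (simp add: psi_def) (metis cinner_commute)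
      finally show "cinner (T x) y = cinner x z" by simp
    qed
  qed
qed

lemma app_pair[simp]: "app (D, f) = f" by (simp add: app_def)
lemma op_dom_pair[simp]: "op_dom (D, f) = D" by (simp add: op_dom_def)

lemma adjoint_prop:
  fixes S :: "'a::complex_inner op"
  assumes "densely_defined S" "y \<in> op_dom (op_adjoint S)" "x \<in> op_dom S"
  shows "cinner (app S x) y = cinner x (app (op_adjoint S) y)"
proof -
  obtain z where z: "\<forall>x\<in>op_dom S. cinner (app S x) y = cinner x z"
    using assms(2) by (auto simp: op_adjoint_def op_dom_def)
  have uniq: "z' = z" if "\<forall>x\<in>op_dom S. cinner (app S x) y = cinner x z'" for z'
    using dense_ortho_eq[of "op_dom S" z' z] assms(1) that z by (simp add: densely_defined_def)
  have "(THE z. \<forall>x\<in>op_dom S. cinner (app S x) y = cinner x z) = z"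
    by (rule the_equality[where P="\<lambda>z. \<forall>x\<in>op_dom S. cinner (app S x) y = cinner x z", OF z]) (rule uniq)
  then have "app (op_adjoint S) y = z"
    unfolding op_adjoint_def by (simp add: app_pair)
  then show ?thesis using z assms(3) by simp
qed

lemma adjoint_bop:
  fixes T :: "'a::chilbert \<Rightarrow> 'a"
  assumes "bounded_clinear T"
  shows "op_dom (op_adjoint (bop T)) = UNIV"
    and "cinner (T x) y = cinner x (app (op_adjoint (bop T)) y)"
proof -
  show d: "op_dom (op_adjoint (bop T)) = UNIV"
    using riesz_adj[OF assms] by (auto simp: op_adjoint_def op_dom_def bop_def app_def)
  have "densely_defined (bop T)" by (simp add: densely_defined_def bop_def op_dom_def)
  from adjoint_prop[OF this, of y x] d show "cinner (T x) y = cinner x (app (op_adjoint (bop T)) y)"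
    by (simp add: bop_def op_dom_def app_def)
qed

lemma linear_op_0:
  assumes "linear_op S" shows "0 \<in> op_dom S" "app S 0 = 0"
proof -
  show d: "0 \<in> op_dom S" using assms by (simp add: linear_op_def csubspace_def)
  have "\<forall>x\<in>op_dom S. \<forall>y\<in>op_dom S. app S (x + y) = app S x + app S y"
    using assms by (simp add: linear_op_def)
  then have "app S (0 + 0) = app S 0 + app S 0" using d by blast
  then show "app S 0 = 0" by simp
qed

lemma graph_csubspace:
  fixes S :: "'a::complex_vector op"
  assumes lin: "linear_op S" shows "csubspace (graph S)"
  unfolding csubspace_def
proof (intro conjI ballI allI)
  show "0 \<in> graph S" using linear_op_0[OF lin] unfolding graph_def
    by (metis (mono_tags, lifting) mem_Collect_eq zero_prod_def)
  fix p q assume "p \<in> graph S" "q \<in> graph S"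
  then obtain x y where xy: "p = (x, app S x)" "q = (y, app S y)" "x \<in> op_dom S" "y \<in> op_dom S"
    by (auto simp: graph_def)
  then have "x + y \<in> op_dom S" "app S (x + y) = app S x + app S y"
    using lin by (auto simp: linear_op_def csubspace_def)
  then show "p + q \<in> graph S" using xy unfolding graph_def by force
next
  fix c p assume "p \<in> graph S"
  then obtain x where xy: "p = (x, app S x)" "x \<in> op_dom S"
    by (auto simp: graph_def)
  then have "scaleC c x \<in> op_dom S" "app S (scaleC c x) = scaleC c (app S x)"
    using lin by (auto simp: linear_op_def csubspace_def)
  then show "scaleC c p \<in> graph S" using xy unfolding graph_def by (force simp: scaleC_prod_def)
qed

lemma adjoint_dense:
  fixes A :: "'a::chilbert op"
  assumes lin: "linear_op A" and cl: "closable A" and dd: "densely_defined A"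
  shows "densely_defined (op_adjoint A)"
proof (rule ccontr)
  let ?D = "op_dom (op_adjoint A)"
  have Dchar: "y \<in> ?D \<longleftrightarrow> (\<exists>z. \<forall>x\<in>op_dom A. cinner (app A x) y = cinner x z)" for y
    by (simp add: op_adjoint_def op_dom_def)
  have DS: "csubspace ?D"
    unfolding csubspace_def
  proof (intro conjI ballI allI)
    show "0 \<in> ?D" unfolding Dchar by (intro exI[of _ 0]) simp
    fix y1 y2 assume "y1 \<in> ?D" "y2 \<in> ?D"
    then obtain z1 z2 where "\<forall>x\<in>op_dom A. cinner (app A x) y1 = cinner x z1"
      "\<forall>x\<in>op_dom A. cinner (app A x) y2 = cinner x z2" unfolding Dchar by blast
    then show "y1 + y2 \<in> ?D" unfolding Dchar
      by (intro exI[of _ "z1 + z2"]) (simp add: cinner_add_right)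
  next
    fix c y assume "y \<in> ?D"
    then obtain z where "\<forall>x\<in>op_dom A. cinner (app A x) y = cinner x z" unfolding Dchar by blast
    then show "scaleC c y \<in> ?D" unfolding Dchar
      by (intro exI[of _ "scaleC c z"]) (simp add: cinner_scaleC_right)
  qed
  assume "\<not> densely_defined (op_adjoint A)"
  then obtain x0 where "x0 \<notin> closure ?D" by (auto simp: densely_defined_def)
  from ortho_exists[OF DS this] obtain u where
    uorth: "\<And>v. v \<in> ?D \<Longrightarrow> cinner v u = 0" and ux: "cinner u x0 \<noteq> 0" by blast
  have "u \<noteq> 0" using ux by auto
  have GS: "csubspace (graph A)"
    by (rule graph_csubspace[OF lin])
  have "(0, u) \<in> closure (graph A)"
  proof (rule ccontr)
    assume "(0, u) \<notin> closure (graph A)"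
    from ortho_exists[OF GS this] obtain ab where
      orth: "\<And>m. m \<in> graph A \<Longrightarrow> cinner m ab = 0" and abu: "cinner ab (0, u) \<noteq> 0" by blast
    obtain a b where ab: "ab = (a, b)" by fastforce
    have bu: "cinner b u \<noteq> 0" using abu by (simp add: ab cinner_prod_def)
    have "b \<in> ?D" unfolding Dchar
    proof (intro exI ballI)
      fix x assume x: "x \<in> op_dom A"
      then have "(x, app A x) \<in> graph A" by (auto simp: graph_def)
      from orth[OF this] have "cinner x a + cinner (app A x) b = 0" by (simp add: ab cinner_prod_def)
      then show "cinner (app A x) b = cinner x (- a)" by (simp add: cinner_minus_right) algebra
    qed
    then show False using uorth bu by blast
  qed
  then have "u = 0" using cl by (simp add: closable_def)
  then show False using \<open>u \<noteq> 0\<close> by simp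
qed

lemma closure_graph_cont:
  fixes S :: "'a::real_normed_vector op"
  assumes dd: "densely_defined S" and g: "continuous_on UNIV g"
    and eq: "\<And>x. x \<in> op_dom S \<Longrightarrow> app S x = g x"
  shows "op_dom (op_closure S) = UNIV" "app (op_closure S) x = g x"
proof -
  have cl: "closure (graph S) = {p. snd p = g (fst p)}"
  proof
    have "closed {p::'a\<times>'a. snd p = g (fst p)}"
      by (intro closed_Collect_eq continuous_intros continuous_on_compose2[OF g]) auto
    moreover have "graph S \<subseteq> {p. snd p = g (fst p)}" using eq by (auto simp: graph_def)
    ultimately show "closure (graph S) \<subseteq> {p. snd p = g (fst p)}" by (rule closure_minimal[rotated])
  next
    show "{p. snd p = g (fst p)} \<subseteq> closure (graph S)"
    proof
      fix p :: "'a \<times> 'a" assume "p \<in> {p. snd p = g (fst p)}"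
      then have p: "p = (fst p, g (fst p))" by (simp add: prod_eq_iff)
      have "fst p \<in> closure (op_dom S)" using dd by (simp add: densely_defined_def)
      then obtain xs where xs: "\<And>k. xs k \<in> op_dom S" "xs \<longlonglongrightarrow> fst p"
        by (auto simp: closure_sequential)
      have "(\<lambda>k. (xs k, g (xs k))) \<longlonglongrightarrow> (fst p, g (fst p))"
        using xs(2) g by (intro tendsto_intros) (auto simp: continuous_on_def intro: tendsto_compose)
      moreover have "(xs k, g (xs k)) \<in> graph S" for k using xs(1)[of k] eq[of "xs k"]
        by (auto simp: graph_def)
      ultimately show "p \<in> closure (graph S)" using p
        by (metis (no_types, lifting) closure_sequential)
    qed
  qed
  show "op_dom (op_closure S) = UNIV" by (simp add: op_closure_def cl)
  show "app (op_closure S) x = g x" by (simp add: op_closure_def cl)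
qed

lemma lipschitz_extension:
  fixes f :: "'a::real_normed_vector \<Rightarrow> 'b::{real_normed_vector,complete_space}"
  assumes dense: "closure D = UNIV" and lip: "\<And>x y. x \<in> D \<Longrightarrow> y \<in> D \<Longrightarrow> norm (f x - f y) \<le> L * norm (x - y)"
  shows "\<exists>g. continuous_on UNIV g \<and> (\<forall>x\<in>D. g x = f x)"
proof -
  have "uniformly_continuous_on D f"
    unfolding uniformly_continuous_on_def
  proof (intro allI impI)
    fix e :: real assume e: "e > 0"
    show "\<exists>d>0. \<forall>x\<in>D. \<forall>x'\<in>D. dist x' x < d \<longrightarrow> dist (f x') (f x) < e"
    proof (intro exI[of _ "e / (\<bar>L\<bar> + 1)"] conjI ballI impI)
      show "e / (\<bar>L\<bar> + 1) > 0" using e by simp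
      fix x x' assume xx: "x \<in> D" "x' \<in> D" "dist x' x < e / (\<bar>L\<bar> + 1)"
      have "dist (f x') (f x) \<le> L * dist x' x" using lip[OF xx(2,1)] by (simp add: dist_norm)
      also have "\<dots> \<le> \<bar>L\<bar> * dist x' x" by (simp add: mult_right_mono)
      also have "\<dots> \<le> (\<bar>L\<bar> + 1) * dist x' x" by (simp add: mult_right_mono)
      also have "\<dots> < (\<bar>L\<bar> + 1) * (e / (\<bar>L\<bar> + 1))"
        using xx(3) by (intro mult_strict_left_mono) auto
      also have "\<dots> = e" by simp
      finally show "dist (f x') (f x) < e" .
    qed
  qed
  from uniformly_continuous_on_extension_on_closure[OF this] obtain g where
    "uniformly_continuous_on (closure D) g" "\<And>x. x \<in> D \<Longrightarrow> f x = g x" by metis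
  then show ?thesis using dense uniformly_continuous_imp_continuous by (metis)
qed

lemma weak_norm_bound:
  fixes u :: "'a::complex_inner"
  assumes dense: "closure D = UNIV" and c: "c \<ge> 0"
    and b: "\<And>x. x \<in> D \<Longrightarrow> cmod (cinner x u) \<le> c * norm x"
  shows "norm u \<le> c"
proof -
  have "closed {x. cmod (cinner x u) \<le> c * norm x}"
    by (intro closed_Collect_le continuous_intros)
  then have "u \<in> {x. cmod (cinner x u) \<le> c * norm x}"
    using dense_closed_all[OF dense] b by blast
  then have "(norm u)^2 \<le> c * norm u" by (simp add: cinner_self norm_power)
  then show ?thesis
    by (cases "norm u = 0") (use c in \<open>auto simp: power2_eq_square\<close>)
qed

lemma weak_norm_bound':
  fixes u :: "'a::complex_inner"
  assumes dense: "closure D = UNIV" and c: "c \<ge> 0"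
    and b: "\<And>x. x \<in> D \<Longrightarrow> cmod (cinner u x) \<le> c * norm x"
  shows "norm u \<le> c"
  using weak_norm_bound[OF dense c] b by (metis cinner_commute complex_mod_cnj)

lemma eq_from_left: "(\<And>y. cinner u y = cinner v y) \<Longrightarrow> (u::'a::complex_inner) = v"
  using cinner_eq_zero_iff[of "u - v"] by (simp add: cinner_diff_left cinner_diff_right)

lemma unit_ball_bound:
  fixes G :: "'a::complex_inner \<Rightarrow> 'b::real_normed_vector"
  assumes G: "bounded_linear G" and dense: "closure D = UNIV"
    and b: "\<And>d. d \<in> D \<Longrightarrow> norm d \<le> 1 \<Longrightarrow> norm (G d) \<le> M"
  shows "norm (G x) \<le> 2 * M * norm x"
proof -
  interpret G: bounded_linear G by fact
  have "closed {x. norm (G x) \<le> M}"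
    by (intro closed_Collect_le continuous_intros G.continuous_on continuous_on_id)
  moreover have "D \<inter> ball 0 1 \<subseteq> {x. norm (G x) \<le> M}" using b by auto
  ultimately have "closure (D \<inter> ball 0 1) \<subseteq> {x. norm (G x) \<le> M}" by (rule closure_minimal[rotated])
  moreover have "ball 0 1 \<subseteq> closure (D \<inter> ball 0 1)"
    using open_Int_closure_subset[of "ball (0::'a) 1" D] dense by (simp add: Int_commute)
  ultimately have ball: "norm y < 1 \<Longrightarrow> norm (G y) \<le> M" for y by auto
  show ?thesis
  proof (cases "x = 0")
    case True then show ?thesis by simp
  next
    case False
    then have nx: "norm x > 0" by simp
    have "norm (G (scaleR (1 / (2 * norm x)) x)) \<le> M"
      using nx by (intro ball) simp
    then have "norm (G x) / (2 * norm x) \<le> M"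
      using nx by (simp add: G.scaleR)
    then show ?thesis using nx by (simp add: divide_le_eq algebra_simps)
  qed
qed

lemma dense_conv:
  fixes f :: "nat \<Rightarrow> 'a::real_normed_vector \<Rightarrow> complex"
  assumes dense: "closure D = UNIV"
    and lip: "\<And>n x x'. cmod (f n x - f n x') \<le> L * norm (x - x')"
    and conv: "\<And>d. d \<in> D \<Longrightarrow> (\<lambda>n. f n d) \<longlonglongrightarrow> 0"
  shows "(\<lambda>n. f n x) \<longlonglongrightarrow> 0"
proof (rule LIMSEQ_I)
  fix e :: real assume e: "e > 0"
  define L' where "L' = \<bar>L\<bar> + 1"
  have L': "L' > 0" by (simp add: L'_def)
  have "x \<in> closure D" using dense by simp
  then obtain d where d: "d \<in> D" "dist d x < e / (2 * L')"
    using e L' by (metis closure_approachable divide_pos_pos mult_pos_pos zero_less_numeral)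
  obtain N where N: "\<And>n. n \<ge> N \<Longrightarrow> norm (f n d - 0) < e / 2"
    using LIMSEQ_D[OF conv[OF d(1)], of "e/2"] e by auto
  show "\<exists>N. \<forall>n\<ge>N. norm (f n x - 0) < e"
  proof (intro exI allI impI)
    fix n assume "N \<le> n"
    have "cmod (f n x - f n d) \<le> L * norm (x - d)" by (rule lip)
    also have "\<dots> \<le> L' * norm (x - d)" by (simp add: L'_def mult_right_mono)
    also have "\<dots> \<le> L' * (e / (2 * L'))"
      using d(2) L' by (intro mult_left_mono) (auto simp: dist_norm norm_minus_commute)
    also have "\<dots> = e / 2" using L' by simp
    finally have "cmod (f n x - f n d) \<le> e / 2" .
    moreover have "cmod (f n d) < e / 2" using N[OF \<open>N \<le> n\<close>] by simp
    ultimately have "cmod (f n x) < e" using norm_triangle_sub[of "f n x" "f n d"]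
      by linarith
    then show "norm (f n x - 0) < e" by simp
  qed
qed


lemma ubp:
  fixes F :: "nat \<Rightarrow> 'a::{real_normed_vector,complete_space} \<Rightarrow> 'b::real_normed_vector"
  assumes lin: "\<And>n. bounded_linear (F n)" and pw: "\<And>x. \<exists>M. \<forall>n. norm (F n x) \<le> M"
  shows "\<exists>C. \<forall>n x. norm (F n x) \<le> C * norm x"
proof -
  define E where "E k = {x. \<forall>n. norm (F n x) \<le> real k}" for k :: nat
  have closedE: "closed (E k)" for k
  proof -
    have "E k = (\<Inter>n. {x. norm (F n x) \<le> real k})" by (auto simp: E_def)
    moreover have "closed {x. norm (F n x) \<le> real k}" for n
      by (intro closed_Collect_le continuous_intros bounded_linear.continuous_on[OF lin] continuous_on_id)
    ultimately show ?thesis by auto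
  qed
  have cover: "(\<Union>k. E k) = UNIV"
  proof -
    have "x \<in> (\<Union>k. E k)" for x
    proof -
      obtain M where M: "\<forall>n. norm (F n x) \<le> M" using pw by blast
      have "M \<le> real (nat \<lceil>M\<rceil>)" by linarith
      then have "x \<in> E (nat \<lceil>M\<rceil>)" using M unfolding E_def by (auto intro: order_trans)
      then show ?thesis by blast
    qed
    then show ?thesis by blast
  qed
  have "\<exists>k. interior (E k) \<noteq> {}"
  proof (rule ccontr)
    assume "\<not> ?thesis"
    then have empty: "\<And>k. interior (E k) = {}" by blast
    have "euclidean interior_of \<Union>(range E) = {}"
      by (rule Baire_category_alt) (auto simp: completely_metrizable_space_euclidean closedE empty)
    then show False using cover by simp
  qed
  then obtain k x0 where "x0 \<in> interior (E k)" by blast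
  then obtain r where r: "r > 0" "ball x0 r \<subseteq> E k" using mem_interior by blast
  have small: "norm (F n z) \<le> 2 * real k" if z: "norm z < r" for n z
  proof -
    interpret L: bounded_linear "F n" by (rule lin)
    have "x0 + z \<in> E k" using r z by (auto simp: dist_norm)
    moreover have "x0 \<in> E k" using r by auto
    ultimately have "norm (F n (x0 + z)) \<le> real k" "norm (F n x0) \<le> real k" by (auto simp: E_def)
    moreover have "F n z = F n (x0 + z) - F n x0" by (simp add: L.add)
    ultimately show ?thesis using norm_triangle_ineq4[of "F n (x0 + z)" "F n x0"] by simp
  qed
  show ?thesis
  proof (intro exI allI)
    fix n x
    interpret L: bounded_linear "F n" by (rule lin)
    show "norm (F n x) \<le> (4 * real k / r) * norm x"
    proof (cases "x = 0")
      case True then show ?thesis by (simp add: L.zero)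
    next
      case False
      then have nx: "norm x > 0" by simp
      have "norm (F n (scaleR (r / (2 * norm x)) x)) \<le> 2 * real k"
        using nx r by (intro small) simp
      then have "r / (2 * norm x) * norm (F n x) \<le> 2 * real k"
        using nx r by (simp add: L.scaleR)
      then show ?thesis using nx r by (simp add: field_simps)
    qed
  qed
qed

section \<open>Closure and adjoint of A\<close>

lemma eq_from_right: "(\<And>x. cinner x u = cinner x v) \<Longrightarrow> (u::'a::complex_inner) = v"
  using cinner_eq_zero_iff[of "u - v"] by (simp add: cinner_diff_left cinner_diff_right)

lemma dense_ortho_eq_left:
  fixes u v :: "'a::complex_inner"
  assumes "closure D = UNIV" "\<And>d. d \<in> D \<Longrightarrow> cinner u d = cinner v d" shows "u = v"
  using dense_ortho_eq[OF assms(1), of u v] assms(2) by (metis cinner_commute)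

lemma closure_graph_adj:
  fixes A :: "'a::chilbert op"
  assumes dd: "densely_defined A" and p: "p \<in> closure (graph A)" and v: "v \<in> op_dom (op_adjoint A)"
  shows "cinner (snd p) v = cinner (fst p) (app (op_adjoint A) v)"
proof -
  have "closed {p::'a\<times>'a. cinner (snd p) v = cinner (fst p) (app (op_adjoint A) v)}"
    by (intro closed_Collect_eq continuous_intros)
  moreover have "graph A \<subseteq> {p. cinner (snd p) v = cinner (fst p) (app (op_adjoint A) v)}"
    using adjoint_prop[OF dd v] by (auto simp: graph_def)
  ultimately have "closure (graph A) \<subseteq> {p. cinner (snd p) v = cinner (fst p) (app (op_adjoint A) v)}"
    by (rule closure_minimal[rotated])
  then show ?thesis using p by auto
qed

lemma closure_A:
  fixes A :: "'a::chilbert op"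
  assumes dd: "densely_defined A" and dds: "densely_defined (op_adjoint A)"
    and x: "x \<in> op_dom (op_closure A)"
  shows "(x, app (op_closure A) x) \<in> closure (graph A)"
    and "\<And>v. v \<in> op_dom (op_adjoint A) \<Longrightarrow> cinner (app (op_closure A) x) v = cinner x (app (op_adjoint A) v)"
proof -
  obtain y where y: "(x, y) \<in> closure (graph A)" using x by (auto simp: op_closure_def)
  have uniq: "y' = y" if "(x, y') \<in> closure (graph A)" for y'
  proof (rule dense_ortho_eq_left)
    show "closure (op_dom (op_adjoint A)) = UNIV" using dds by (simp add: densely_defined_def)
    fix v assume "v \<in> op_dom (op_adjoint A)"
    then show "cinner y' v = cinner y v"
      using closure_graph_adj[OF dd that] closure_graph_adj[OF dd y] by simp
  qed
  have "(THE y. (x, y) \<in> closure (graph A)) = y"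
    by (rule the_equality[where P="\<lambda>y. (x, y) \<in> closure (graph A)", OF y]) (rule uniq)
  then have "app (op_closure A) x = y" by (simp add: op_closure_def)
  then show xin: "(x, app (op_closure A) x) \<in> closure (graph A)" using y by simp
  fix v assume "v \<in> op_dom (op_adjoint A)"
  from closure_graph_adj[OF dd xin this]
  show "cinner (app (op_closure A) x) v = cinner x (app (op_adjoint A) v)" by simp
qed

lemma dom_closure_A0:
  fixes A A0 :: "'a::chilbert op"
  assumes dd: "densely_defined A" and sub: "op_subset A0 (op_adjoint A)"
  shows "op_dom (op_closure A0) \<subseteq> op_dom (op_adjoint A)"
proof
  fix y assume "y \<in> op_dom (op_closure A0)"
  then obtain w where yw: "(y, w) \<in> closure (graph A0)" by (auto simp: op_closure_def)
  have "\<forall>x\<in>op_dom A. cinner (app A x) y = cinner x w"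
  proof
    fix x assume x: "x \<in> op_dom A"
    have "closed {p::'a\<times>'a. cinner (app A x) (fst p) = cinner x (snd p)}"
      by (intro closed_Collect_eq continuous_intros)
    moreover have "graph A0 \<subseteq> {p. cinner (app A x) (fst p) = cinner x (snd p)}"
    proof
      fix p assume "p \<in> graph A0"
      then obtain v where v: "p = (v, app A0 v)" "v \<in> op_dom A0" by (auto simp: graph_def)
      then have "v \<in> op_dom (op_adjoint A)" "app A0 v = app (op_adjoint A) v"
        using sub by (auto simp: op_subset_def)
      then show "p \<in> {p. cinner (app A x) (fst p) = cinner x (snd p)}"
        using adjoint_prop[OF dd _ x] v by simp
    qed
    ultimately have "closure (graph A0) \<subseteq> {p. cinner (app A x) (fst p) = cinner x (snd p)}"
      by (rule closure_minimal[rotated])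
    then show "cinner (app A x) y = cinner x w" using yw by auto
  qed
  then show "y \<in> op_dom (op_adjoint A)" by (auto simp: op_adjoint_def)
qed

lemma dense_closure_A:
  fixes A :: "'a::real_normed_vector op"
  assumes "densely_defined A" shows "closure (op_dom (op_closure A)) = UNIV"
proof -
  have "op_dom A \<subseteq> op_dom (op_closure A)"
    using closure_subset[of "graph A"] by (auto simp: op_closure_def graph_def)
  then show ?thesis using assms closure_mono unfolding densely_defined_def by blast
qed


lemma per_T:
  fixes A A0 :: "'a::chilbert op" and T :: "'a \<Rightarrow> 'a"
  assumes lin: "linear_op A" and cl: "closable A" and dd: "densely_defined A"
    and sub: "op_subset A0 (op_adjoint A)" and T: "bounded_clinear T"
    and f1: "densely_defined (ad (bop T) (op_closure A)) \<and> bounded_op (ad (bop T) (op_closure A))"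
    and f2: "app (op_adjoint (bop T)) ` op_dom (op_adjoint A) \<subseteq> op_dom (op_closure A0)"
  defines "B \<equiv> ad (bop T) (op_closure A)" and "C \<equiv> ad (op_adjoint (bop T)) (op_adjoint A)"
  shows "op_dom (op_closure B) = UNIV \<and> op_dom (op_closure C) = UNIV
    \<and> bounded_clinear (app (op_closure B)) \<and> bounded_clinear (app (op_closure C))
    \<and> (\<forall>x y. cinner (app (op_closure B) x) y = - cinner x (app (op_closure C) y))
    \<and> (\<forall>x\<in>op_dom B. app (op_closure B) x = app B x)
    \<and> (\<forall>x\<in>op_dom (op_closure A). \<forall>y\<in>op_dom (op_adjoint A).
         cinner x (app (op_closure C) y) = cinner (T x) (app (op_adjoint A) y) - cinner (T (app (op_closure A) x)) y)"
proof -
  define Ts where "Ts = app (op_adjoint (bop T))"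
  define As where "As = app (op_adjoint A)"
  define Ac where "Ac = app (op_closure A)"
  define DA where "DA = op_dom (op_adjoint A)"
  define DAc where "DAc = op_dom (op_closure A)"
  have adjT: "\<And>x y. cinner (T x) y = cinner x (Ts y)" and domT: "op_dom (op_adjoint (bop T)) = UNIV"
    using adjoint_bop[OF T] by (auto simp: Ts_def)
  have ddA: "densely_defined (op_adjoint A)" by (rule adjoint_dense[OF lin cl dd])
  have densDA: "closure DA = UNIV" using ddA by (simp add: DA_def densely_defined_def)
  have K1: "\<And>x v. x \<in> DAc \<Longrightarrow> v \<in> DA \<Longrightarrow> cinner (Ac x) v = cinner x (As v)"
    using closure_A(2)[OF dd ddA] by (simp add: Ac_def As_def DA_def DAc_def)
  have TsD: "\<And>y. y \<in> DA \<Longrightarrow> Ts y \<in> DA"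
    using f2 dom_closure_A0[OF dd sub] by (auto simp: Ts_def DA_def)
  have domB: "op_dom B = {x \<in> DAc. T x \<in> DAc}"
    by (auto simp: B_def ad_def op_minus_def op_mult_def bop_def DAc_def)
  have appB: "\<And>x. app B x = T (Ac x) - Ac (T x)"
    by (simp add: B_def ad_def op_minus_def op_mult_def bop_def Ac_def)
  have domC: "op_dom C = DA"
    using TsD domT by (auto simp: C_def ad_def op_minus_def op_mult_def DA_def Ts_def)
  have appC: "\<And>y. app C y = Ts (As y) - As (Ts y)"
    by (simp add: C_def ad_def op_minus_def op_mult_def Ts_def As_def)
  have R: "cinner (app B x) y = - cinner x (app C y)" if x: "x \<in> op_dom B" and y: "y \<in> DA" for x y
  proof -
    have x1: "x \<in> DAc" and x2: "T x \<in> DAc" using x domB by auto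
    have "cinner (T (Ac x)) y = cinner x (As (Ts y))"
      using adjT K1[OF x1 TsD[OF y]] by simp
    moreover have "cinner (Ac (T x)) y = cinner x (Ts (As y))"
      using adjT K1[OF x2 y] by simp
    ultimately show ?thesis by (simp add: appB appC cinner_diff_left cinner_diff_right)
  qed
  obtain K where K0: "K \<ge> 0" and Kb: "\<And>f. f \<in> op_dom B \<Longrightarrow> norm (app B f) \<le> K * norm f"
    using f1 unfolding B_def bounded_op_def by blast
  have densB: "closure (op_dom B) = UNIV" using f1 by (simp add: B_def densely_defined_def)
  have Cbound: "norm (app C y) \<le> K * norm y" if y: "y \<in> DA" for y
  proof (rule weak_norm_bound[OF densB])
    show "0 \<le> K * norm y" using K0 by simp
    fix x assume x: "x \<in> op_dom B"
    have "cmod (cinner x (app C y)) = cmod (cinner (app B x) y)" using R[OF x y] by simp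
    also have "\<dots> \<le> norm (app B x) * norm y" by (rule cinner_Cauchy_Schwarz)
    also have "\<dots> \<le> K * norm x * norm y" using Kb[OF x] by (simp add: mult_right_mono)
    finally show "cmod (cinner x (app C y)) \<le> K * norm y * norm x" by (simp add: algebra_simps)
  qed
  have Clip: "norm (app C y - app C y') \<le> K * norm (y - y')" if y: "y \<in> DA" "y' \<in> DA" for y y'
  proof (rule weak_norm_bound[OF densB])
    show "0 \<le> K * norm (y - y')" using K0 by simp
    fix x assume x: "x \<in> op_dom B"
    have "cinner x (app C y - app C y') = - cinner (app B x) (y - y')"
      using R[OF x y(1)] R[OF x y(2)] by (simp add: cinner_diff_right)
    then have "cmod (cinner x (app C y - app C y')) = cmod (cinner (app B x) (y - y'))" by simp
    also have "\<dots> \<le> norm (app B x) * norm (y - y')" by (rule cinner_Cauchy_Schwarz)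
    also have "\<dots> \<le> K * norm x * norm (y - y')" using Kb[OF x] by (simp add: mult_right_mono)
    finally show "cmod (cinner x (app C y - app C y')) \<le> K * norm (y - y') * norm x"
      by (simp add: algebra_simps)
  qed
  have Blip: "norm (app B x - app B x') \<le> K * norm (x - x')" if x: "x \<in> op_dom B" "x' \<in> op_dom B" for x x'
  proof (rule weak_norm_bound'[OF densDA])
    show "0 \<le> K * norm (x - x')" using K0 by simp
    fix y assume y: "y \<in> DA"
    have "cinner (app B x - app B x') y = - cinner (x - x') (app C y)"
      using R[OF x(1) y] R[OF x(2) y] by (simp add: cinner_diff_left)
    then have "cmod (cinner (app B x - app B x') y) = cmod (cinner (x - x') (app C y))" by simp
    also have "\<dots> \<le> norm (x - x') * norm (app C y)" by (rule cinner_Cauchy_Schwarz)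
    also have "\<dots> \<le> norm (x - x') * (K * norm y)" using Cbound[OF y] by (simp add: mult_left_mono)
    finally show "cmod (cinner (app B x - app B x') y) \<le> K * norm (x - x') * norm y"
      by (simp add: algebra_simps)
  qed
  obtain gB where gBc: "continuous_on UNIV gB" and gBeq: "\<And>x. x \<in> op_dom B \<Longrightarrow> gB x = app B x"
    using lipschitz_extension[OF densB Blip] by blast
  obtain gC where gCc: "continuous_on UNIV gC" and gCeq: "\<And>y. y \<in> DA \<Longrightarrow> gC y = app C y"
    using lipschitz_extension[OF densDA Clip] by blast
  have R1: "cinner (gB x) y = - cinner x (gC y)" if y: "y \<in> DA" for x y
  proof -
    have "closed {x. cinner (gB x) y = - cinner x (gC y)}"
      by (intro closed_Collect_eq continuous_intros continuous_on_cinner[OF gBc] continuous_on_id)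
    moreover have "op_dom B \<subseteq> {x. cinner (gB x) y = - cinner x (gC y)}"
      using R y gBeq gCeq by auto
    ultimately show ?thesis using dense_closed_all[OF densB] by blast
  qed
  have Rall: "cinner (gB x) y = - cinner x (gC y)" for x y
  proof -
    have "closed {y. cinner (gB x) y = - cinner x (gC y)}"
      by (intro closed_Collect_eq continuous_intros continuous_on_cinner[OF _ gCc] continuous_on_id)
    moreover have "DA \<subseteq> {y. cinner (gB x) y = - cinner x (gC y)}"
      using R1 by auto
    ultimately show ?thesis using dense_closed_all[OF densDA] by blast
  qed
  have gBadd: "gB (x + x') = gB x + gB x'" for x x'
    by (rule eq_from_left) (simp add: Rall cinner_add_left cinner_add_right)
  have gBsc: "gB (scaleC c x) = scaleC c (gB x)" for c x
    by (rule eq_from_left) (simp add: Rall cinner_scaleC_left)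
  have gCadd: "gC (y + y') = gC y + gC y'" for y y'
  proof (rule eq_from_right)
    fix x
    have "cinner x (gC (y + y')) = - cinner (gB x) (y + y')" using Rall[of x "y + y'"] by simp
    also have "\<dots> = cinner x (gC y + gC y')"
      using Rall[of x y] Rall[of x y'] by (simp add: cinner_add_right)
    finally show "cinner x (gC (y + y')) = cinner x (gC y + gC y')" .
  qed
  have gCsc: "gC (scaleC c y) = scaleC c (gC y)" for c y
  proof (rule eq_from_right)
    fix x
    have "cinner x (gC (scaleC c y)) = - cinner (gB x) (scaleC c y)" using Rall[of x "scaleC c y"] by simp
    also have "\<dots> = cinner x (scaleC c (gC y))"
      using Rall[of x y] by (simp add: cinner_scaleC_right)
    finally show "cinner x (gC (scaleC c y)) = cinner x (scaleC c (gC y))" .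
  qed
  have gBb: "norm (gB x) \<le> K * norm x" for x
  proof -
    have "closed {x. norm (gB x) \<le> K * norm x}"
      by (intro closed_Collect_le continuous_intros continuous_on_norm[OF gBc])
    moreover have "op_dom B \<subseteq> {x. norm (gB x) \<le> K * norm x}" using Kb gBeq by auto
    ultimately show ?thesis using dense_closed_all[OF densB] by blast
  qed
  have gCb: "norm (gC y) \<le> K * norm y" for y
  proof -
    have "closed {y. norm (gC y) \<le> K * norm y}"
      by (intro closed_Collect_le continuous_intros continuous_on_norm[OF gCc])
    moreover have "DA \<subseteq> {y. norm (gC y) \<le> K * norm y}" using Cbound gCeq by auto
    ultimately show ?thesis using dense_closed_all[OF densDA] by blast
  qed
  have bclB: "bounded_clinear gB" unfolding bounded_clinear_def
    using gBadd gBsc gBb by (metis mult.commute)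
  have bclC: "bounded_clinear gC" unfolding bounded_clinear_def
    using gCadd gCsc gCb by (metis mult.commute)
  have clB: "op_dom (op_closure B) = UNIV" "\<And>x. app (op_closure B) x = gB x"
    using closure_graph_cont[of B gB] f1 gBc gBeq by (auto simp: B_def)
  have ddC: "densely_defined C" using densDA domC by (simp add: densely_defined_def)
  have clC: "op_dom (op_closure C) = UNIV" "\<And>y. app (op_closure C) y = gC y"
    using closure_graph_cont[OF ddC gCc] gCeq domC by auto
  have last: "cinner x (gC y) = cinner (T x) (As y) - cinner (T (Ac x)) y"
    if x: "x \<in> DAc" and y: "y \<in> DA" for x y
  proof -
    have "cinner x (gC y) = cinner x (Ts (As y)) - cinner x (As (Ts y))"
      using gCeq[OF y] by (simp add: appC cinner_diff_right)
    also have "cinner x (Ts (As y)) = cinner (T x) (As y)" using adjT by simp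
    also have "cinner x (As (Ts y)) = cinner (T (Ac x)) y"
      using K1[OF x TsD[OF y]] adjT by simp
    finally show ?thesis .
  qed
  have fB: "app (op_closure B) = gB" using clB(2) by (rule ext)
  have fC: "app (op_closure C) = gC" using clC(2) by (rule ext)
  show ?thesis
    unfolding fB fC using clB(1) clC(1) bclB bclC Rall gBeq last
    by (simp add: Ac_def As_def DA_def DAc_def)
qed




lemma sup_finite:
  fixes S :: "nat \<Rightarrow> 'a::real_normed_vector op"
  shows "(SUP n. op_norm (S n)) < \<infinity> \<longleftrightarrow>
    (\<exists>M. \<forall>n. \<forall>f\<in>op_dom (S n). norm f \<le> 1 \<longrightarrow> norm (app (S n) f) \<le> M)"
proof
  assume "(SUP n. op_norm (S n)) < \<infinity>"
  then obtain M where M: "(SUP n. op_norm (S n)) \<le> ereal M"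
    by (cases "(SUP n. op_norm (S n))") (auto intro: exI[of _ 0])
  show "\<exists>M. \<forall>n. \<forall>f\<in>op_dom (S n). norm f \<le> 1 \<longrightarrow> norm (app (S n) f) \<le> M"
  proof (intro exI[of _ M] allI ballI impI)
    fix n f assume "f \<in> op_dom (S n)" "norm f \<le> 1"
    then have "ereal (norm (app (S n) f)) \<le> op_norm (S n)"
      unfolding op_norm_def by (intro SUP_upper) auto
    also have "\<dots> \<le> (SUP n. op_norm (S n))" by (rule SUP_upper) simp
    finally have "ereal (norm (app (S n) f)) \<le> ereal M" using M by (rule order_trans)
    then show "norm (app (S n) f) \<le> M" by simp
  qed
next
  assume "\<exists>M. \<forall>n. \<forall>f\<in>op_dom (S n). norm f \<le> 1 \<longrightarrow> norm (app (S n) f) \<le> M"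
  then obtain M where M: "\<And>n f. f \<in> op_dom (S n) \<Longrightarrow> norm f \<le> 1 \<Longrightarrow> norm (app (S n) f) \<le> M" by blast
  have "op_norm (S n) \<le> ereal M" for n
    unfolding op_norm_def by (rule SUP_least) (use M in auto)
  then have le: "(SUP n. op_norm (S n)) \<le> ereal M" by (rule SUP_least)
  have lt: "ereal M < \<infinity>" by simp
  show "(SUP n. op_norm (S n)) < \<infinity>" using le_less_trans[OF le lt] .
qed

lemma cnj_cinner: "cnj (cinner x y) = cinner y (x::'a::complex_inner)"
  using cinner_commute[of y x] by simp

lemma wot_conj:
  assumes "wot_tendsto T id"
  shows "(\<lambda>n. cinner (T n b) a) \<longlonglongrightarrow> cinner b a"
proof -
  have "(\<lambda>n. cinner a (T n b)) \<longlonglongrightarrow> cinner a b"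
    using assms by (simp add: wot_tendsto_def)
  then have "(\<lambda>n. cnj (cinner a (T n b))) \<longlonglongrightarrow> cnj (cinner a b)"
    by (rule tendsto_cnj)
  then show ?thesis by (simp add: cnj_cinner)
qed

lemma bcl_diff: "bounded_clinear G \<Longrightarrow> G (x - y) = G x - G y" for G :: "'a::complex_inner \<Rightarrow> 'a"
proof -
  assume a: "bounded_clinear G"
  have "G ((x - y) + y) = G (x - y) + G y" by (rule bcl_add[OF a])
  then have "G x - G y = G (x - y)" by simp
  then show ?thesis by simp
qed

theorem proposition2:
  fixes A A0 :: "'a::chilbert op" and T :: "nat \<Rightarrow> 'a \<Rightarrow> 'a"
  assumes "linear_op A" and "closable A" and "densely_defined A"
    and "linear_op A0" and "op_subset A0 (op_adjoint A)"
    and "\<And>n. bounded_clinear (T n)"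
    and "wot_tendsto T id"
    and f1: "\<And>n. densely_defined (ad (bop (T n)) (op_closure A)) \<and> bounded_op (ad (bop (T n)) (op_closure A))"
    and f2: "\<And>n. app (op_adjoint (bop (T n))) ` op_dom (op_adjoint A) \<subseteq> op_dom (op_closure A0)"
  shows "((SUP n. op_norm (ad (bop (T n)) (op_closure A))) < \<infinity>
          \<longleftrightarrow> (SUP n. op_norm (op_closure (ad (op_adjoint (bop (T n))) (op_adjoint A)))) < \<infinity>)
       \<and> ((SUP n. op_norm (op_closure (ad (op_adjoint (bop (T n))) (op_adjoint A)))) < \<infinity>
          \<longleftrightarrow> op_wot_tendsto_zero (\<lambda>n. op_closure (ad (bop (T n)) (op_closure A))))
       \<and> (op_wot_tendsto_zero (\<lambda>n. op_closure (ad (bop (T n)) (op_closure A)))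
          \<longleftrightarrow> op_wot_tendsto_zero (\<lambda>n. op_closure (ad (op_adjoint (bop (T n))) (op_adjoint A))))"
proof -
  note lin = assms(1) and cl = assms(2) and dd = assms(3) and sub = assms(5)
    and Tb = assms(6) and wot = assms(7)
  define B where "B n = ad (bop (T n)) (op_closure A)" for n
  define C where "C n = ad (op_adjoint (bop (T n))) (op_adjoint A)" for n
  define GB where "GB n = app (op_closure (B n))" for n
  define GC where "GC n = app (op_closure (C n))" for n
  have PT: "op_dom (op_closure (B n)) = UNIV \<and> op_dom (op_closure (C n)) = UNIV
    \<and> bounded_clinear (GB n) \<and> bounded_clinear (GC n)
    \<and> (\<forall>x y. cinner (GB n x) y = - cinner x (GC n y))
    \<and> (\<forall>x\<in>op_dom (B n). GB n x = app (B n) x)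
    \<and> (\<forall>x\<in>op_dom (op_closure A). \<forall>y\<in>op_dom (op_adjoint A).
         cinner x (GC n y) = cinner (T n x) (app (op_adjoint A) y) - cinner (T n (app (op_closure A) x)) y)" for n
    unfolding GB_def GC_def B_def C_def by (rule per_T[OF lin cl dd sub Tb f1 f2])
  have domB: "\<And>n. op_dom (op_closure (B n)) = UNIV" and domC: "\<And>n. op_dom (op_closure (C n)) = UNIV"
    and bclB: "\<And>n. bounded_clinear (GB n)" and bclC: "\<And>n. bounded_clinear (GC n)"
    and Rel: "\<And>n x y. cinner (GB n x) y = - cinner x (GC n y)"
    and eqB: "\<And>n x. x \<in> op_dom (B n) \<Longrightarrow> GB n x = app (B n) x"
    and last: "\<And>n x y. x \<in> op_dom (op_closure A) \<Longrightarrow> y \<in> op_dom (op_adjoint A) \<Longrightarrow>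
         cinner x (GC n y) = cinner (T n x) (app (op_adjoint A) y) - cinner (T n (app (op_closure A) x)) y"
    using PT by auto
  have blB: "\<And>n. bounded_linear (GB n)" and blC: "\<And>n. bounded_linear (GC n)"
    using bclB bclC bcl_bounded_linear by auto
  have ddA: "densely_defined (op_adjoint A)" by (rule adjoint_dense[OF lin cl dd])
  have densDA: "closure (op_dom (op_adjoint A)) = UNIV" using ddA by (simp add: densely_defined_def)
  have densDAc: "closure (op_dom (op_closure A)) = UNIV" by (rule dense_closure_A[OF dd])
  have densB: "\<And>n. closure (op_dom (B n)) = UNIV" using f1 by (simp add: B_def densely_defined_def)
  have BtoC: "norm (GC n y) \<le> L * norm y" if L: "L \<ge> 0" and b: "\<And>n x. norm (GB n x) \<le> L * norm x" for L n y
  proof (rule weak_norm_bound[of UNIV])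
    fix x :: 'a
    have "cmod (cinner x (GC n y)) = cmod (cinner (GB n x) y)" using Rel[of n x y] by simp
    also have "\<dots> \<le> norm (GB n x) * norm y" by (rule cinner_Cauchy_Schwarz)
    also have "\<dots> \<le> L * norm x * norm y" using b[of n x] by (simp add: mult_right_mono)
    finally show "cmod (cinner x (GC n y)) \<le> L * norm y * norm x" by (simp add: algebra_simps)
  qed (use L in auto)
  have CtoB: "norm (GB n x) \<le> L * norm x" if L: "L \<ge> 0" and b: "\<And>n y. norm (GC n y) \<le> L * norm y" for L n x
  proof (rule weak_norm_bound'[of UNIV])
    fix y :: 'a
    have "cmod (cinner (GB n x) y) = cmod (cinner x (GC n y))" using Rel[of n x y] by simp
    also have "\<dots> \<le> norm x * norm (GC n y)" by (rule cinner_Cauchy_Schwarz)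
    also have "\<dots> \<le> norm x * (L * norm y)" using b[of n y] by (simp add: mult_left_mono)
    finally show "cmod (cinner (GB n x) y) \<le> L * norm x * norm y" by (simp add: algebra_simps)
  qed (use L in auto)
  define P1 where "P1 \<longleftrightarrow> (\<exists>M. \<forall>n. \<forall>f\<in>op_dom (B n). norm f \<le> 1 \<longrightarrow> norm (app (B n) f) \<le> M)"
  define P2 where "P2 \<longleftrightarrow> (\<exists>M. \<forall>n f. norm f \<le> 1 \<longrightarrow> norm (GC n f) \<le> M)"
  define Q3 where "Q3 \<longleftrightarrow> (\<forall>x y. (\<lambda>n. cinner x (GB n y)) \<longlonglongrightarrow> 0)"
  define Q4 where "Q4 \<longleftrightarrow> (\<forall>x y. (\<lambda>n. cinner x (GC n y)) \<longlonglongrightarrow> 0)"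
  have e1: "(SUP n. op_norm (B n)) < \<infinity> \<longleftrightarrow> P1" unfolding P1_def by (rule sup_finite)
  have e2: "(SUP n. op_norm (op_closure (C n))) < \<infinity> \<longleftrightarrow> P2"
    unfolding P2_def sup_finite by (simp add: domC GC_def)
  have e3: "op_wot_tendsto_zero (\<lambda>n. op_closure (B n)) \<longleftrightarrow> Q3"
    unfolding Q3_def op_wot_tendsto_zero_def wot_tendsto_def using domB bclB by (simp add: GB_def)
  have e4: "op_wot_tendsto_zero (\<lambda>n. op_closure (C n)) \<longleftrightarrow> Q4"
    unfolding Q4_def op_wot_tendsto_zero_def wot_tendsto_def using domC bclC by (simp add: GC_def)
  have c1: "P1 \<longleftrightarrow> P2"
  proof
    assume P1
    then obtain M where M: "\<And>n f. f \<in> op_dom (B n) \<Longrightarrow> norm f \<le> 1 \<Longrightarrow> norm (app (B n) f) \<le> M"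
      unfolding P1_def by blast
    have b: "norm (GB n x) \<le> 2 * \<bar>M\<bar> * norm x" for n x
    proof (rule unit_ball_bound[OF blB[of n] densB[of n]])
      fix d assume "d \<in> op_dom (B n)" "norm d \<le> 1"
      then have "norm (GB n d) \<le> M" using M eqB by simp
      then show "norm (GB n d) \<le> \<bar>M\<bar>" by simp
    qed
    have c: "norm (GC n y) \<le> 2 * \<bar>M\<bar> * norm y" for n y
      using BtoC[of "2 * \<bar>M\<bar>"] b by simp
    have "norm (GC n y) \<le> 2 * \<bar>M\<bar>" if "norm y \<le> 1" for n y
    proof -
      have "2 * \<bar>M\<bar> * norm y \<le> 2 * \<bar>M\<bar> * 1" using that by (intro mult_left_mono) auto
      then show ?thesis using c[of n y] by simp
    qed
    then show P2 unfolding P2_def by blast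
  next
    assume P2
    then obtain M where M: "\<And>n f. norm f \<le> 1 \<Longrightarrow> norm (GC n f) \<le> M"
      unfolding P2_def by blast
    have b: "norm (GC n y) \<le> 2 * \<bar>M\<bar> * norm y" for n y
    proof (rule unit_ball_bound[OF blC[of n], of UNIV])
      fix d :: 'a assume "norm d \<le> 1"
      then have "norm (GC n d) \<le> M" using M by simp
      then show "norm (GC n d) \<le> \<bar>M\<bar>" by simp
    qed simp
    have c: "norm (GB n x) \<le> 2 * \<bar>M\<bar> * norm x" for n x
      using CtoB[of "2 * \<bar>M\<bar>"] b by simp
    have "norm (app (B n) f) \<le> 2 * \<bar>M\<bar>" if "f \<in> op_dom (B n)" "norm f \<le> 1" for n f
    proof -
      have "2 * \<bar>M\<bar> * norm f \<le> 2 * \<bar>M\<bar> * 1" using that by (intro mult_left_mono) auto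
      then show ?thesis using c[of n f] eqB[OF that(1)] by simp
    qed
    then show P1 unfolding P1_def by blast
  qed
  have c3: "Q3 \<longleftrightarrow> Q4"
  proof
    assume Q3
    show Q4 unfolding Q4_def
    proof (intro allI)
      fix x y
      have "(\<lambda>n. - cnj (cinner y (GB n x))) \<longlonglongrightarrow> - cnj 0"
        using \<open>Q3\<close> unfolding Q3_def by (intro tendsto_intros) auto
      moreover have "- cnj (cinner y (GB n x)) = cinner x (GC n y)" for n
        using Rel[of n x y] by (simp add: cnj_cinner)
      ultimately show "(\<lambda>n. cinner x (GC n y)) \<longlonglongrightarrow> 0" by simp
    qed
  next
    assume Q4
    show Q3 unfolding Q3_def
    proof (intro allI)
      fix x y
      have "(\<lambda>n. - cnj (cinner y (GC n x))) \<longlonglongrightarrow> - cnj 0"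
        using \<open>Q4\<close> unfolding Q4_def by (intro tendsto_intros) auto
      moreover have "- cnj (cinner y (GC n x)) = cinner x (GB n y)" for n
        using arg_cong[OF Rel[of n y x], of cnj] by (simp add: cnj_cinner)
      ultimately show "(\<lambda>n. cinner x (GB n y)) \<longlonglongrightarrow> 0" by simp
    qed
  qed
  have c2: "P2 \<longleftrightarrow> Q4"
  proof
    assume P2
    then obtain M where M: "\<And>n f. norm f \<le> 1 \<Longrightarrow> norm (GC n f) \<le> M"
      unfolding P2_def by blast
    define L where "L = 2 * \<bar>M\<bar>"
    have L0: "L \<ge> 0" by (simp add: L_def)
    have b: "norm (GC n y) \<le> L * norm y" for n y
      unfolding L_def
    proof (rule unit_ball_bound[OF blC[of n], of UNIV])
      fix d :: 'a assume "norm d \<le> 1"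
      then have "norm (GC n d) \<le> M" using M by simp
      then show "norm (GC n d) \<le> \<bar>M\<bar>" by simp
    qed simp
    show Q4 unfolding Q4_def
    proof (intro allI)
      fix x y
      have stepa: "(\<lambda>n. cinner x (GC n y)) \<longlonglongrightarrow> 0"
        if x: "x \<in> op_dom (op_closure A)" and y: "y \<in> op_dom (op_adjoint A)" for x y
      proof -
        have "(\<lambda>n. cinner (T n x) (app (op_adjoint A) y) - cinner (T n (app (op_closure A) x)) y)
            \<longlonglongrightarrow> cinner x (app (op_adjoint A) y) - cinner (app (op_closure A) x) y"
          by (intro tendsto_diff wot_conj[OF wot])
        moreover have "cinner (app (op_closure A) x) y = cinner x (app (op_adjoint A) y)"
          using closure_A(2)[OF dd ddA x y] .
        ultimately show ?thesis using last[OF x y] by simp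
      qed
      have stepb: "(\<lambda>n. cinner x (GC n y)) \<longlonglongrightarrow> 0" if y: "y \<in> op_dom (op_adjoint A)" for x y
      proof (rule dense_conv[OF densDAc, where f="\<lambda>n x. cinner x (GC n y)" and L="L * norm y"])
        fix n and x x' :: 'a
        have "cmod (cinner x (GC n y) - cinner x' (GC n y)) = cmod (cinner (x - x') (GC n y))"
          by (simp add: cinner_diff_left)
        also have "\<dots> \<le> norm (x - x') * norm (GC n y)" by (rule cinner_Cauchy_Schwarz)
        also have "\<dots> \<le> norm (x - x') * (L * norm y)" using b by (simp add: mult_left_mono)
        finally show "cmod (cinner x (GC n y) - cinner x' (GC n y)) \<le> L * norm y * norm (x - x')"
          by (simp add: algebra_simps)
      next
        fix d assume "d \<in> op_dom (op_closure A)"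
        then show "(\<lambda>n. cinner d (GC n y)) \<longlonglongrightarrow> 0" using stepa y by blast
      qed
      show "(\<lambda>n. cinner x (GC n y)) \<longlonglongrightarrow> 0"
      proof (rule dense_conv[OF densDA, where f="\<lambda>n y. cinner x (GC n y)" and L="L * norm x"])
        fix n and y y' :: 'a
        have "cmod (cinner x (GC n y) - cinner x (GC n y')) = cmod (cinner x (GC n (y - y')))"
          by (simp add: cinner_diff_right bcl_diff[OF bclC])
        also have "\<dots> \<le> norm x * norm (GC n (y - y'))" by (rule cinner_Cauchy_Schwarz)
        also have "\<dots> \<le> norm x * (L * norm (y - y'))" using b by (simp add: mult_left_mono)
        finally show "cmod (cinner x (GC n y) - cinner x (GC n y')) \<le> L * norm x * norm (y - y')"
          by (simp add: algebra_simps)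
      next
        fix d assume "d \<in> op_dom (op_adjoint A)"
        then show "(\<lambda>n. cinner x (GC n d)) \<longlonglongrightarrow> 0" using stepb by blast
      qed
    qed
  next
    assume Q4
    have pt: "\<exists>M. \<forall>n. norm (GC n y) \<le> M" for y
    proof -
      have lin: "bounded_linear (\<lambda>x. cinner (GC n y) x)" for n
        by (rule bounded_bilinear.bounded_linear_right[OF bounded_bilinear_cinner])
      have pw: "\<exists>M. \<forall>n. norm (cinner (GC n y) x) \<le> M" for x
      proof -
        have "(\<lambda>n. cinner x (GC n y)) \<longlonglongrightarrow> 0" using \<open>Q4\<close> by (simp add: Q4_def)
        then have "Bseq (\<lambda>n. cinner x (GC n y))" by (rule convergent_imp_Bseq[OF convergentI])
        then obtain K where "\<And>n. norm (cinner x (GC n y)) \<le> K" by (auto simp: Bseq_def)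
        moreover have "norm (cinner (GC n y) x) = norm (cinner x (GC n y))" for n
          by (metis cnj_cinner complex_mod_cnj)
        ultimately show ?thesis by metis
      qed
      obtain K where K: "\<And>n x. norm (cinner (GC n y) x) \<le> K * norm x"
        using ubp[OF lin pw] by blast
      have "norm (GC n y) \<le> \<bar>K\<bar>" for n
      proof (rule weak_norm_bound'[of UNIV])
        fix x :: 'a
        show "cmod (cinner (GC n y) x) \<le> \<bar>K\<bar> * norm x"
          using K[of n x] by (metis abs_ge_self mult_right_mono norm_ge_zero order_trans)
      qed auto
      then show ?thesis by blast
    qed
    obtain K where K: "\<And>n y. norm (GC n y) \<le> K * norm y"
      using ubp[OF blC pt] by blast
    have "norm (GC n y) \<le> \<bar>K\<bar>" if "norm y \<le> 1" for n y
    proof -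
      have "K * norm y \<le> \<bar>K\<bar> * norm y" by (simp add: mult_right_mono)
      also have "\<dots> \<le> \<bar>K\<bar> * 1" using that by (intro mult_left_mono) auto
      finally show ?thesis using K[of n y] by simp
    qed
    then show P2 unfolding P2_def by blast
  qed
  have fin: "((SUP n. op_norm (B n)) < \<infinity> \<longleftrightarrow> (SUP n. op_norm (op_closure (C n))) < \<infinity>)
       \<and> ((SUP n. op_norm (op_closure (C n))) < \<infinity> \<longleftrightarrow> op_wot_tendsto_zero (\<lambda>n. op_closure (B n)))
       \<and> (op_wot_tendsto_zero (\<lambda>n. op_closure (B n)) \<longleftrightarrow> op_wot_tendsto_zero (\<lambda>n. op_closure (C n)))"
    using e1 e2 e3 e4 c1 c2 c3 by blast
  then show ?thesis unfolding B_def C_def .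
qed


end
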